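(* Let $U$ be an infinite complex matrix (rows and columns indexed by positive integers) with finitely many nonzero entries in every row and every column. Then $U$ is unitary (i.e. $UU^*=U^*U=I$) if and only if $U^*U=I$ and every row of $U$ has norm $1$.
   Context: $U^*$ denotes the Hermitian conjugate of $U$; $I$ is the infinite identity matrix; products of infinite matrices are defined entrywise by $(XY)_{ij}=\sum_k x_{ik}y_{kj}$. *)

theory Defs
  imports "HOL-Analysis.Analysis"
begin

text \<open>Infinite complex matrices, rows and columns indexed by positive integers.
  We use functions nat => nat => complex and only ever look at indices >= 1;
  entries at index 0 are ignored.\<close>

type_synonym imat = "nat \<Rightarrow> nat \<Rightarrow> complex"

definition pos_idx :: "nat set" where "pos_idx = {1..}"

definition imat_mult :: "imat \<Rightarrow> imat \<Rightarrow> imat" where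
  "imat_mult X Y = (\<lambda>i j. \<Sum>\<^sub>\<infinity>k\<in>pos_idx. X i k * Y k j)"

definition imat_adj :: "imat \<Rightarrow> imat" where
  "imat_adj U = (\<lambda>i j. cnj (U j i))"

definition imat_id :: imat where
  "imat_id = (\<lambda>i j. if i = j then 1 else 0)"

definition imat_eq :: "imat \<Rightarrow> imat \<Rightarrow> bool" where
  "imat_eq X Y \<longleftrightarrow> (\<forall>i\<in>pos_idx. \<forall>j\<in>pos_idx. X i j = Y i j)"

definition row_finite :: "imat \<Rightarrow> bool" where
  "row_finite U \<longleftrightarrow> (\<forall>i\<in>pos_idx. finite {j\<in>pos_idx. U i j \<noteq> 0})"

definition col_finite :: "imat \<Rightarrow> bool" where
  "col_finite U \<longleftrightarrow> (\<forall>j\<in>pos_idx. finite {i\<in>pos_idx. U i j \<noteq> 0})"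

definition row_norm :: "imat \<Rightarrow> nat \<Rightarrow> real" where
  "row_norm U i = sqrt (\<Sum>\<^sub>\<infinity>j\<in>pos_idx. (cmod (U i j))\<^sup>2)"

definition unitary :: "imat \<Rightarrow> bool" where
  "unitary U \<longleftrightarrow> imat_eq (imat_mult U (imat_adj U)) imat_id
               \<and> imat_eq (imat_mult (imat_adj U) U) imat_id"

end

theory Submission
  imports Defs
begin

lemma infsum_fin_supp:
  assumes "finite F" "F \<subseteq> A" "\<And>x. x \<in> A - F \<Longrightarrow> f x = 0"
  shows "infsum f A = sum f F"
proof -
  have "infsum f A = infsum f F"
    by (rule infsum_cong_neutral) (use assms in auto)
  then show ?thesis using assms(1) by simp
qed

lemma rows_orth:
  fixes U :: imat
  assumes rf: "row_finite U" and cf: "col_finite U"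
    and cols: "imat_eq (imat_mult (imat_adj U) U) imat_id"
    and rn: "\<forall>i\<in>pos_idx. row_norm U i = 1"
    and i: "i \<in> pos_idx" and m: "m \<in> pos_idx"
  shows "imat_mult U (imat_adj U) m i = imat_id m i"
proof -
  define J where "J = {j\<in>pos_idx. U i j \<noteq> 0}"
  define C where "C j = {k\<in>pos_idx. U k j \<noteq> 0}" for j
  have Jfin: "finite J" using rf i unfolding row_finite_def J_def by auto
  have Cfin: "finite (C j)" if "j \<in> pos_idx" for j
    using cf that unfolding col_finite_def C_def by auto
  define w where "w k = (\<Sum>j\<in>J. U k j * cnj (U i j))" for k
  have wm: "imat_mult U (imat_adj U) k i = w k" for k
    unfolding imat_mult_def imat_adj_def w_def
    by (rule infsum_fin_supp) (use Jfin in \<open>auto simp: J_def\<close>)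
  have colorth: "(\<Sum>k\<in>C j. cnj (U k j) * U k j') = (if j = j' then 1 else 0)"
    if "j \<in> pos_idx" "j' \<in> pos_idx" for j j'
  proof -
    have "imat_mult (imat_adj U) U j j' = (\<Sum>k\<in>C j. cnj (U k j) * U k j')"
      unfolding imat_mult_def imat_adj_def
      by (rule infsum_fin_supp) (use Cfin[OF that(1)] in \<open>auto simp: C_def\<close>)
    moreover have "imat_mult (imat_adj U) U j j' = imat_id j j'"
      using cols that unfolding imat_eq_def by auto
    ultimately show ?thesis by (simp add: imat_id_def)
  qed
  define M where "M = insert i (\<Union>j\<in>J. C j)"
  have Mfin: "finite M" unfolding M_def using Jfin Cfin by (auto simp: J_def)
  have Mpos: "M \<subseteq> pos_idx" using i by (auto simp: M_def C_def)
  have wout: "w k = 0" if "k \<in> pos_idx - M" for k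
    unfolding w_def using that by (intro sum.neutral) (auto simp: M_def C_def)
  have colM: "(\<Sum>k\<in>M. cnj (U k j) * U k j') = (if j = j' then 1 else 0)"
    if "j \<in> J" "j' \<in> J" for j j'
  proof -
    have "(\<Sum>k\<in>M. cnj (U k j) * U k j') = (\<Sum>k\<in>C j. cnj (U k j) * U k j')"
      by (rule sum.mono_neutral_right) (use Mfin Mpos that in \<open>auto simp: M_def C_def\<close>)
    also have "\<dots> = (if j = j' then 1 else 0)"
      using colorth that by (auto simp: J_def)
    finally show ?thesis .
  qed
  have "row_norm U i = 1" using rn i by auto
  hence "(\<Sum>\<^sub>\<infinity>j\<in>pos_idx. (cmod (U i j))\<^sup>2) = 1"
    unfolding row_norm_def by simp
  moreover have "(\<Sum>\<^sub>\<infinity>j\<in>pos_idx. (cmod (U i j))\<^sup>2) = (\<Sum>j\<in>J. (cmod (U i j))\<^sup>2)"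
    by (rule infsum_fin_supp) (use Jfin in \<open>auto simp: J_def\<close>)
  ultimately have norm1: "(\<Sum>j\<in>J. (cmod (U i j))\<^sup>2) = 1" by simp
  have sq: "(\<Sum>j\<in>J. U i j * cnj (U i j)) = 1"
  proof -
    have "(\<Sum>j\<in>J. U i j * cnj (U i j)) = of_real (\<Sum>j\<in>J. (cmod (U i j))\<^sup>2)"
      by (simp only: of_real_sum complex_norm_square)
    then show ?thesis using norm1 by simp
  qed
  have wi: "w i = 1" using sq by (simp add: w_def)
  have "(\<Sum>k\<in>M. cnj (w k) * w k)
      = (\<Sum>k\<in>M. \<Sum>j\<in>J. \<Sum>j'\<in>J. (U i j * cnj (U i j')) * (cnj (U k j) * U k j'))"
    by (simp add: w_def cnj_sum sum_distrib_left sum_distrib_right mult_ac)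
  also have "\<dots> = (\<Sum>j\<in>J. \<Sum>j'\<in>J. \<Sum>k\<in>M. (U i j * cnj (U i j')) * (cnj (U k j) * U k j'))"
    by (simp add: sum.swap[of _ M])
  also have "\<dots> = (\<Sum>j\<in>J. \<Sum>j'\<in>J. (U i j * cnj (U i j')) * (\<Sum>k\<in>M. cnj (U k j) * U k j'))"
    by (simp add: sum_distrib_left)
  also have "\<dots> = (\<Sum>j\<in>J. \<Sum>j'\<in>J. (U i j * cnj (U i j')) * (if j = j' then 1 else 0))"
    by (intro sum.cong refl) (simp add: colM)
  also have "\<dots> = (\<Sum>j\<in>J. U i j * cnj (U i j))"
    using Jfin by (simp add: if_distrib[where f="\<lambda>x. _ * x"] sum.delta cong: if_cong)
  also have "\<dots> = 1" by (rule sq)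
  finally have "(\<Sum>k\<in>M. cnj (w k) * w k) = 1" .
  moreover have "(\<Sum>k\<in>M. cnj (w k) * w k) = of_real (\<Sum>k\<in>M. (cmod (w k))\<^sup>2)"
    by (simp only: of_real_sum complex_norm_square mult.commute)
  ultimately have S: "(\<Sum>k\<in>M. (cmod (w k))\<^sup>2) = 1"
    by (metis of_real_eq_1_iff)
  have iM: "i \<in> M" by (simp add: M_def)
  have "(\<Sum>k\<in>M. (cmod (w k))\<^sup>2) = (cmod (w i))\<^sup>2 + (\<Sum>k\<in>M - {i}. (cmod (w k))\<^sup>2)"
    using Mfin iM by (simp add: sum.remove)
  with S wi have "(\<Sum>k\<in>M - {i}. (cmod (w k))\<^sup>2) = 0" by simp
  hence z: "\<forall>k\<in>M - {i}. (cmod (w k))\<^sup>2 = 0"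
    using Mfin by (subst (asm) sum_nonneg_eq_0_iff) auto
  show ?thesis
  proof (cases "m = i")
    case True then show ?thesis using wi wm by (simp add: imat_id_def)
  next
    case False
    have "w m = 0"
    proof (cases "m \<in> M")
      case True then show ?thesis using z False by auto
    next
      case False then show ?thesis using wout m by auto
    qed
    then show ?thesis using False wm by (simp add: imat_id_def)
  qed
qed

lemma row_norm_from_diag:
  fixes U :: imat
  assumes rf: "row_finite U" and i: "i \<in> pos_idx"
    and d: "imat_mult U (imat_adj U) i i = 1"
  shows "row_norm U i = 1"
proof -
  define J where "J = {j\<in>pos_idx. U i j \<noteq> 0}"
  have Jfin: "finite J" using rf i unfolding row_finite_def J_def by auto
  have "imat_mult U (imat_adj U) i i = (\<Sum>j\<in>J. U i j * cnj (U i j))"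
    unfolding imat_mult_def imat_adj_def
    by (rule infsum_fin_supp) (use Jfin in \<open>auto simp: J_def\<close>)
  also have "\<dots> = of_real (\<Sum>j\<in>J. (cmod (U i j))\<^sup>2)"
    by (simp only: of_real_sum complex_norm_square)
  finally have "(\<Sum>j\<in>J. (cmod (U i j))\<^sup>2) = 1" using d by (metis of_real_eq_1_iff)
  moreover have "(\<Sum>\<^sub>\<infinity>j\<in>pos_idx. (cmod (U i j))\<^sup>2) = (\<Sum>j\<in>J. (cmod (U i j))\<^sup>2)"
    by (rule infsum_fin_supp) (use Jfin in \<open>auto simp: J_def\<close>)
  ultimately show ?thesis unfolding row_norm_def by simp
qed

theorem lemma4:
  fixes U :: imat
  assumes "row_finite U" and "col_finite U"
  shows "unitary U \<longleftrightarrow>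
           (imat_eq (imat_mult (imat_adj U) U) imat_id \<and> (\<forall>i\<in>pos_idx. row_norm U i = 1))"
proof
  assume u: "unitary U"
  then have "imat_eq (imat_mult U (imat_adj U)) imat_id" unfolding unitary_def by simp
  then have "\<forall>i\<in>pos_idx. row_norm U i = 1"
    using row_norm_from_diag[OF assms(1)] unfolding imat_eq_def imat_id_def by auto
  with u show "imat_eq (imat_mult (imat_adj U) U) imat_id \<and> (\<forall>i\<in>pos_idx. row_norm U i = 1)"
    unfolding unitary_def by simp
next
  assume h: "imat_eq (imat_mult (imat_adj U) U) imat_id \<and> (\<forall>i\<in>pos_idx. row_norm U i = 1)"
  then show "unitary U"
    unfolding unitary_def using rows_orth[OF assms] by (auto simp: imat_eq_def)
qed

end
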